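(* Let $k\ge 2$ and let $P=(p_1,\dots,p_k)$ and $Q=(q_1,\dots,q_k)$ be two multinomial (categorical) probability distributions over the same index set $\{1,\dots,k\}$. Suppose the indices of the largest probabilities of $P$ and $Q$ do not match, i.e. $\arg\max_i p_i \neq \arg\max_j q_j$. Then $$d_{H^2}(Q,P)\;\ge\; 1-\sqrt{\frac{2-\bigl(\sqrt{p_{(1)}}-\sqrt{p_{(2)}}\bigr)^2}{2}},$$ where $p_{(1)}$ and $p_{(2)}$ denote the first and second largest probabilities among $p_1,\dots,p_k$.
   Context: The squared Hellinger distance is $d_{H^2}(Q,P)=1-\sum_{i=1}^k\sqrt{p_iq_i}=\frac12\sum_{i=1}^k(\sqrt{p_i}-\sqrt{q_i})^2$. *)

theory Defs
  imports Complex_Main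
begin

definition is_distribution :: "nat \<Rightarrow> (nat \<Rightarrow> real) \<Rightarrow> bool" where
  "is_distribution k p \<longleftrightarrow> (\<forall>i\<in>{1..k}. 0 \<le> p i) \<and> (\<Sum>i=1..k. p i) = 1"

definition hellinger_sq :: "nat \<Rightarrow> (nat \<Rightarrow> real) \<Rightarrow> (nat \<Rightarrow> real) \<Rightarrow> real" where
  "hellinger_sq k q p = 1 - (\<Sum>i=1..k. sqrt (p i * q i))"

text \<open>The arg max of p over {1..k}, as a set (to handle ties).\<close>
definition argmax_set :: "nat \<Rightarrow> (nat \<Rightarrow> real) \<Rightarrow> nat set" where
  "argmax_set k p = {i \<in> {1..k}. \<forall>j\<in>{1..k}. p j \<le> p i}"

text \<open>Order statistics: ord_stat k p m is the m-th largest value (m = 1, 2, ...)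
  among p 1, ..., p k (counted with multiplicity).\<close>
definition ord_stat :: "nat \<Rightarrow> (nat \<Rightarrow> real) \<Rightarrow> nat \<Rightarrow> real" where
  "ord_stat k p m = rev (sort (map p [1..<k+1])) ! (m - 1)"

end

theory Submission
  imports Defs "HOL-Analysis.Convex"
begin

lemma alg_bound:
  fixes a b c d A B :: real
  assumes "0 \<le> a" "0 \<le> b" "0 \<le> c" "0 \<le> d" "0 \<le> A" "0 \<le> B"
    and "a \<ge> b" "d \<ge> c"
    and "A^2 = 1 - a^2 - b^2" "B^2 = 1 - c^2 - d^2"
  shows "a*c + b*d + A*B \<le> sqrt (1 - (a - b)^2/2)"
proof -
  define U where "U = (a+b)*(c+d)/2"
  have h1: "a*c + b*d \<le> U"
  proof -
    have "2*(a*c + b*d) = (a+b)*(c+d) + (a-b)*(c-d)" by (simp add: algebra_simps)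
    moreover have "(a-b)*(c-d) \<le> 0" using assms by (simp add: mult_nonneg_nonpos)
    ultimately have "2*(a*c + b*d) \<le> (a+b)*(c+d)" by linarith
    then show ?thesis unfolding U_def by (simp add: field_simps)
  qed
  have U0: "U \<ge> 0" unfolding U_def using assms by simp
  have cs: "(U + A*B)^2 \<le> ((a+b)^2/2 + A^2) * ((c+d)^2/2 + B^2)"
  proof -
    have "((a+b)^2/2 + A^2) * ((c+d)^2/2 + B^2) - (U + A*B)^2
        = ((a+b)*B - (c+d)*A)^2/2"
      unfolding U_def power2_eq_square by (simp add: field_simps)
    moreover have "((a+b)*B - (c+d)*A)^2/2 \<ge> 0" by simp
    ultimately show ?thesis by linarith
  qed
  have e1: "(a+b)^2/2 + A^2 = 1 - (a - b)^2/2"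
    using assms(9) unfolding power2_eq_square by (simp add: field_simps)
  have e2: "(c+d)^2/2 + B^2 = 1 - (c - d)^2/2"
    using assms(10) unfolding power2_eq_square by (simp add: field_simps)
  have nn: "1 - (a - b)^2/2 \<ge> 0"
    using e1 by (metis add_nonneg_nonneg zero_le_power2 divide_nonneg_pos zero_less_numeral)
  have "(U + A*B)^2 \<le> 1 - (a - b)^2/2"
  proof -
    have "(1 - (a - b)^2/2) * (1 - (c - d)^2/2) \<le> (1 - (a - b)^2/2) * 1"
      using nn by (intro mult_left_mono) auto
    then show ?thesis using cs e1 e2 by simp
  qed
  then have "U + A*B \<le> sqrt (1 - (a - b)^2/2)"
    using U0 assms(5,6) by (intro real_le_rsqrt) auto
  then show ?thesis using h1 by linarith
qed

lemma key_analytic: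
  fixes x y :: "nat \<Rightarrow> real" and S :: "nat set"
  assumes fin: "finite S" and nx: "\<And>l. l \<in> S \<Longrightarrow> 0 \<le> x l" and ny: "\<And>l. l \<in> S \<Longrightarrow> 0 \<le> y l"
    and sx: "(\<Sum>l\<in>S. (x l)^2) = 1" and sy: "(\<Sum>l\<in>S. (y l)^2) = 1"
    and ij: "i \<in> S" "j \<in> S" "i \<noteq> j" and xy: "x i \<ge> x j" "y j \<ge> y i"
  shows "(\<Sum>l\<in>S. x l * y l) \<le> sqrt (1 - (x i - x j)^2/2)"
proof -
  define R where "R = S - {i, j}"
  have finR: "finite R" using fin R_def by simp
  have split: "\<And>f::nat\<Rightarrow>real. (\<Sum>l\<in>S. f l) = f i + f j + (\<Sum>l\<in>R. f l)"
  proof -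
    fix f :: "nat \<Rightarrow> real"
    have S: "S = insert i (insert j R)" using ij R_def by auto
    have n1: "i \<notin> insert j R" and n2: "j \<notin> R" using ij R_def by auto
    have "(\<Sum>l\<in>insert i (insert j R). f l) = f i + (\<Sum>l\<in>insert j R. f l)"
      by (rule sum.insert[OF _ n1]) (simp add: finR)
    also have "\<dots> = f i + (f j + (\<Sum>l\<in>R. f l))"
      by (simp only: sum.insert[OF finR n2])
    finally show "(\<Sum>l\<in>S. f l) = f i + f j + (\<Sum>l\<in>R. f l)"
      using S by (simp add: add.assoc)
  qed
  define A where "A = sqrt (\<Sum>l\<in>R. (x l)^2)"
  define B where "B = sqrt (\<Sum>l\<in>R. (y l)^2)"
  have RA: "(\<Sum>l\<in>R. (x l)^2) \<ge> 0" by (simp add: sum_nonneg)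
  have RB: "(\<Sum>l\<in>R. (y l)^2) \<ge> 0" by (simp add: sum_nonneg)
  have A2: "A^2 = 1 - (x i)^2 - (x j)^2" using sx split[of "\<lambda>l. (x l)^2"] RA A_def by simp
  have B2: "B^2 = 1 - (y i)^2 - (y j)^2" using sy split[of "\<lambda>l. (y l)^2"] RB B_def by simp
  have cs: "(\<Sum>l\<in>R. x l * y l) \<le> A * B"
  proof -
    have "(\<Sum>l\<in>R. x l * y l)^2 \<le> (\<Sum>l\<in>R. (x l)^2) * (\<Sum>l\<in>R. (y l)^2)"
      by (rule Cauchy_Schwarz_ineq_sum)
    then have "\<bar>\<Sum>l\<in>R. x l * y l\<bar> \<le> sqrt ((\<Sum>l\<in>R. (x l)^2) * (\<Sum>l\<in>R. (y l)^2))"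
      using real_le_rsqrt real_sqrt_abs by (metis real_sqrt_le_mono)
    then show ?thesis unfolding A_def B_def by (simp add: real_sqrt_mult)
  qed
  have "x i * y i + x j * y j + A * B \<le> sqrt (1 - (x i - x j)^2/2)"
    by (rule alg_bound) (use nx ny ij xy A2 B2 A_def B_def RA RB in auto)
  then show ?thesis using split[of "\<lambda>l. x l * y l"] cs by linarith
qed


lemma argmax_nonempty:
  assumes "k \<ge> 1"
  obtains i where "i \<in> argmax_set k p"
proof -
  have "finite (p ` {1..k})" "p ` {1..k} \<noteq> {}" using assms by auto
  then have "Max (p ` {1..k}) \<in> p ` {1..k}" by (rule Max_in)
  then obtain i where i: "i \<in> {1..k}" "p i = Max (p ` {1..k})" by auto
  have h: "\<forall>j\<in>{1..k}. p j \<le> p i" using i by auto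
  show ?thesis
  proof (rule that)
    show "i \<in> argmax_set k p" unfolding argmax_set_def using i h by blast
  qed
qed

lemma ord_stat_facts:
  assumes k: "k \<ge> 2" and i: "i \<in> argmax_set k p" and j: "j \<in> {1..k}" "j \<noteq> i"
  shows "ord_stat k p 1 = p i" "p j \<le> ord_stat k p 2" "ord_stat k p 2 \<le> ord_stat k p 1"
proof -
  define xs where "xs = map p [1..<k+1]"
  define s where "s = sort xs"
  have ls: "length s = k" unfolding s_def xs_def by simp
  have srt: "sorted s" unfolding s_def by simp
  have sets: "set s = p ` {1..k}" unfolding s_def xs_def by auto
  have i1: "i \<in> {1..k}" and imax: "\<And>l. l \<in> {1..k} \<Longrightarrow> p l \<le> p i"
    using i unfolding argmax_set_def by auto
  have o1: "ord_stat k p 1 = s ! (k - 1)"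
    unfolding ord_stat_def s_def[symmetric] xs_def[symmetric] using ls k
    by (simp add: rev_nth)
  have o2: "ord_stat k p 2 = s ! (k - 2)"
    unfolding ord_stat_def s_def[symmetric] xs_def[symmetric] using ls k
    by (simp add: rev_nth numeral_2_eq_2)
  show "ord_stat k p 2 \<le> ord_stat k p 1"
    unfolding o1 o2 using srt ls k by (intro sorted_nth_mono) auto
  have "s ! (k - 1) \<in> set s" using ls k by simp
  then have a1: "s ! (k - 1) \<le> p i" using sets imax by auto
  have "p i \<in> set s" using sets i1 by auto
  then obtain n where n: "n < k" "s ! n = p i" using ls by (metis in_set_conv_nth)
  have "s ! n \<le> s ! (k - 1)" using srt n ls by (intro sorted_nth_mono) auto
  then show "ord_stat k p 1 = p i" using o1 a1 n by simp
  show "p j \<le> ord_stat k p 2"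
  proof (rule ccontr)
    assume "\<not> p j \<le> ord_stat k p 2"
    then have lt: "s ! (k - 2) < p j" using o2 by simp
    define P where "P = (\<lambda>v::real. p j \<le> v)"
    have all_lt: "\<And>m. m \<le> k - 2 \<Longrightarrow> s ! m < p j"
    proof -
      fix m assume "m \<le> k - 2"
      then have "s ! m \<le> s ! (k - 2)" using srt ls k by (intro sorted_nth_mono) auto
      then show "s ! m < p j" using lt by simp
    qed
    have decomp: "s = take (k - 1) s @ [s ! (k - 1)]"
    proof -
      have "take (Suc (k - 1)) s = take (k - 1) s @ [s ! (k - 1)]"
        using ls k by (intro take_Suc_conv_app_nth) simp
      moreover have "take (Suc (k - 1)) s = s" using ls k by simp
      ultimately show ?thesis by simp
    qed
    have "filter P (take (k - 1) s) = []"
    proof -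
      have "\<forall>v\<in>set (take (k - 1) s). \<not> P v"
      proof
        fix v assume "v \<in> set (take (k - 1) s)"
        then obtain m where m: "m < length (take (k - 1) s)" "take (k - 1) s ! m = v"
          by (metis in_set_conv_nth)
        then have "m < k - 1" by simp
        then have "s ! m < p j" using all_lt by simp
        then show "\<not> P v" using m P_def by simp
      qed
      then show ?thesis by (simp add: filter_empty_conv)
    qed
    moreover have "length (filter P s) = length (filter P (take (k - 1) s @ [s ! (k - 1)]))"
      by (rule arg_cong[where f="\<lambda>t. length (filter P t)", OF decomp])
    ultimately have "length (filter P s) \<le> 1" by simp
    moreover have "length (filter P s) = length (filter P xs)"
      unfolding s_def by (simp add: filter_sort)
    moreover have "length (filter P xs) \<ge> 2"
    proof -
      define F where "F = filter (P \<circ> p) [1..<k+1]"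
      have e: "filter P xs = map p F"
        unfolding xs_def F_def by (simp add: filter_map)
      have sub: "{i, j} \<subseteq> set F"
      proof -
        have "P (p i)" "P (p j)" using imax j unfolding P_def by auto
        moreover have "i \<in> set [1..<k+1]" "j \<in> set [1..<k+1]" using i1 j by auto
        ultimately show ?thesis unfolding F_def by (simp del: upt_Suc)
      qed
      have c2: "card {i, j} = 2" using j by auto
      have d: "distinct F" unfolding F_def by (simp del: upt_Suc)
      have "card {i, j} \<le> card (set F)" using sub by (intro card_mono) auto
      also have "\<dots> = length F" using d by (rule distinct_card)
      finally have "2 \<le> length F" using c2 by simp
      then show ?thesis using e by simp
    qed
    ultimately show False by simp
  qed
qed


lemma obtain_ij:
  assumes k: "k \<ge> 1" and ne: "argmax_set k p \<noteq> argmax_set k q"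
  obtains i j where "i \<in> argmax_set k p" "j \<in> {1..k}" "j \<noteq> i" "q i \<le> q j"
proof -
  obtain i0 where i0: "i0 \<in> argmax_set k p" using argmax_nonempty[OF k] by blast
  obtain j0 where j0: "j0 \<in> argmax_set k q" using argmax_nonempty[OF k] by blast
  show ?thesis
  proof (cases "argmax_set k p \<subseteq> argmax_set k q")
    case True
    then obtain j where j: "j \<in> argmax_set k q" "j \<notin> argmax_set k p" using ne by blast
    have "i0 \<in> argmax_set k q" using True i0 by blast
    then have "q i0 \<le> q j" using j unfolding argmax_set_def by auto
    moreover have "j \<noteq> i0" using i0 j by auto
    moreover have "j \<in> {1..k}" using j unfolding argmax_set_def by auto
    ultimately show ?thesis using that i0 by blast
  next
    case False
    then obtain i where i: "i \<in> argmax_set k p" "i \<notin> argmax_set k q" by blast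
    have "q i \<le> q j0" using i j0 unfolding argmax_set_def by auto
    moreover have "j0 \<noteq> i" using i j0 by auto
    moreover have "j0 \<in> {1..k}" using j0 unfolding argmax_set_def by auto
    ultimately show ?thesis using that i by blast
  qed
qed

theorem mainTheorem2:
  fixes k :: nat and p q :: "nat \<Rightarrow> real"
  assumes "k \<ge> 2"
    and "is_distribution k p" and "is_distribution k q"
    and "argmax_set k p \<noteq> argmax_set k q"
  shows "hellinger_sq k q p \<ge>
    1 - sqrt ((2 - (sqrt (ord_stat k p 1) - sqrt (ord_stat k p 2))^2) / 2)"
proof -
  have k1: "k \<ge> 1" using assms(1) by simp
  have pn: "\<And>l. l \<in> {1..k} \<Longrightarrow> 0 \<le> p l" and ps: "(\<Sum>l=1..k. p l) = 1"
    using assms(2) unfolding is_distribution_def by auto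
  have qn: "\<And>l. l \<in> {1..k} \<Longrightarrow> 0 \<le> q l" and qs: "(\<Sum>l=1..k. q l) = 1"
    using assms(3) unfolding is_distribution_def by auto
  obtain i j where i: "i \<in> argmax_set k p" and j: "j \<in> {1..k}" "j \<noteq> i" and qij: "q i \<le> q j"
    using obtain_ij[OF k1 assms(4)] by blast
  have i1: "i \<in> {1..k}" and imax: "\<And>l. l \<in> {1..k} \<Longrightarrow> p l \<le> p i"
    using i unfolding argmax_set_def by auto
  define x where "x = (\<lambda>l. sqrt (p l))"
  define y where "y = (\<lambda>l. sqrt (q l))"
  have sx: "(\<Sum>l\<in>{1..k}. (x l)^2) = 1" using ps pn unfolding x_def by simp
  have sy: "(\<Sum>l\<in>{1..k}. (y l)^2) = 1" using qs qn unfolding y_def by simp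
  have bc: "(\<Sum>l\<in>{1..k}. x l * y l) \<le> sqrt (1 - (x i - x j)^2/2)"
    by (rule key_analytic[where i=i and j=j]) (use sx sy i1 j imax qij pn qn in \<open>auto simp: x_def y_def\<close>)
  have bceq: "(\<Sum>l=1..k. sqrt (p l * q l)) = (\<Sum>l\<in>{1..k}. x l * y l)"
    unfolding x_def y_def by (simp add: real_sqrt_mult)
  have o1: "ord_stat k p 1 = p i" and o2: "p j \<le> ord_stat k p 2"
    and o3: "ord_stat k p 2 \<le> ord_stat k p 1"
    using ord_stat_facts[OF assms(1) i j] by auto
  have pj0: "0 \<le> p j" using pn j by auto
  have d1: "0 \<le> sqrt (ord_stat k p 1) - sqrt (ord_stat k p 2)" using o3 by simp
  have d2: "sqrt (ord_stat k p 1) - sqrt (ord_stat k p 2) \<le> x i - x j"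
    unfolding x_def using o1 o2 pj0 by simp
  have "(sqrt (ord_stat k p 1) - sqrt (ord_stat k p 2))^2 \<le> (x i - x j)^2"
    using d1 d2 by (intro power_mono) auto
  then have "1 - (x i - x j)^2/2 \<le> (2 - (sqrt (ord_stat k p 1) - sqrt (ord_stat k p 2))^2) / 2"
    by (simp add: field_simps)
  then have "sqrt (1 - (x i - x j)^2/2) \<le> sqrt ((2 - (sqrt (ord_stat k p 1) - sqrt (ord_stat k p 2))^2) / 2)"
    by (rule real_sqrt_le_mono)
  then show ?thesis unfolding hellinger_sq_def using bc bceq by linarith
qed

end
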